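(* Let $\mathbb{F}$ be a field of characteristic not equal to $2$, $d \ge 1$, and $\ell\in\mathbb{F}$ nonzero. If there exist points $v_0,\dots,v_d\in\mathbb{F}^d$ with $\|v_i-v_j\| = \ell$ for all $i\ne j$ (an equilateral $d$-simplex of sidelength $\ell$), then $(d+1)\left(\frac{\ell}{2}\right)^d$ is a square in $\mathbb{F}$. If moreover $d$ is even, then $d+1$ is a square in $\mathbb{F}$.
   Context: For $x,y\in\mathbb{F}^d$, $\|x-y\| = \sum_{i=1}^d (x_i-y_i)^2\in\mathbb{F}$. *)

theory Defs
  imports Main
begin

definition sqdist :: "nat \<Rightarrow> (nat \<Rightarrow> 'a::comm_ring_1) \<Rightarrow> (nat \<Rightarrow> 'a) \<Rightarrow> 'a" where
  "sqdist d x y = (\<Sum>i<d. (x i - y i)^2)"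

definition is_square :: "'a::comm_semiring_1 \<Rightarrow> bool" where
  "is_square a \<longleftrightarrow> (\<exists>s. a = s^2)"

end

theory Submission
  imports Defs "Jordan_Normal_Form.Determinant"
begin

lemma two_ne0: assumes "CHAR('a::field) \<noteq> 2" shows "(2::'a) \<noteq> 0"
proof
  assume "(2::'a) = 0"
  then have "CHAR('a) dvd 2" using of_nat_eq_0_iff_char_dvd[of 2, where 'a='a] by simp
  moreover have "CHAR('a) \<noteq> 1" using of_nat_eq_0_iff_char_dvd[of 1, where 'a='a] by auto
  moreover have "CHAR('a) \<le> 2" using \<open>CHAR('a) dvd 2\<close> using dvd_imp_le by fastforce
  moreover have "CHAR('a) \<noteq> 0" using \<open>CHAR('a) dvd 2\<close> by (metis dvd_0_left_iff zero_neq_numeral)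
  ultimately show False using assms by linarith
qed

lemma sumQ: fixes i j d :: nat assumes "i < d" "j < d"
  shows "(\<Sum>k\<in>{0..<d}. (if i = k then 2 else 1) * (if j \<le> k then 1 else 0) :: 'a::comm_ring_1)
     = of_nat (d - j) + (if j \<le> i then 1 else 0)"
proof -
  have "(\<Sum>k\<in>{0..<d}. (if i = k then 2 else 1) * (if j \<le> k then 1 else 0) :: 'a)
     = (\<Sum>k\<in>{0..<d}. (if j \<le> k then 1 else 0)) + (\<Sum>k\<in>{0..<d}. (if k = i then (if j \<le> k then 1 else 0) else 0))"
    unfolding sum.distrib[symmetric] by (rule sum.cong) auto
  also have "(\<Sum>k\<in>{0..<d}. (if j \<le> k then 1 else 0) :: 'a) = of_nat (card ({0..<d} \<inter> {k. j \<le> k}))"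
    by (simp add: sum.If_cases)
  also have "{0..<d} \<inter> {k. j \<le> k} = {j..<d}" by auto
  also have "(\<Sum>k\<in>{0..<d}. (if k = i then (if j \<le> k then 1 else 0) else 0) :: 'a) = (if j \<le> i then 1 else 0)"
    using assms by (simp add: sum.delta)
  finally show ?thesis by simp
qed

lemma sumP: fixes X :: "nat \<Rightarrow> 'a::comm_ring_1" assumes "i < d"
  shows "(\<Sum>k\<in>{0..<d}. (if i = k then 1 else if Suc k = i then -1 else 0) * X k)
     = X i - (if i > 0 then X (i - 1) else 0)"
proof -
  have "(\<Sum>k\<in>{0..<d}. (if i = k then 1 else if Suc k = i then -1 else 0) * X k)
     = (\<Sum>k\<in>{0..<d}. (if k = i then X k else 0)) - (\<Sum>k\<in>{0..<d}. (if k = i - 1 \<and> i > 0 then X k else 0))"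
    unfolding sum_subtractf[symmetric] by (rule sum.cong) auto
  also have "\<dots> = X i - (if i > 0 then X (i - 1) else 0)"
    using assms by (cases "i > 0") (simp_all add: sum.delta)
  finally show ?thesis .
qed

lemma detB: "det (mat d d (\<lambda>(i,j). if i = j then 2 else 1) :: 'a::comm_ring_1 mat) = of_nat (d+1)"
proof -
  define B :: "'a mat" where "B = mat d d (\<lambda>(i,j). if i = j then 2 else 1)"
  define P :: "'a mat" where "P = mat d d (\<lambda>(i,j). if i = j then 1 else if Suc j = i then -1 else 0)"
  define Q :: "'a mat" where "Q = mat d d (\<lambda>(i,j). if j \<le> i then 1 else 0)"
  define T :: "'a mat" where "T = mat d d (\<lambda>(i,j). if i = 0 then of_nat (d - j) + (if j = 0 then 1 else 0) else if i = j then 1 else 0)"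
  have BQ: "B * Q = mat d d (\<lambda>(i,j). of_nat (d - j) + (if j \<le> i then 1 else 0))"
    by (rule eq_matI) (auto simp: B_def Q_def scalar_prod_def sumQ)
  have PBQ: "P * (B * Q) = T"
  proof (rule eq_matI)
    fix i j assume ij: "i < dim_row T" "j < dim_col T"
    then have "(P * (B * Q)) $$ (i,j) = (\<Sum>k\<in>{0..<d}. (if i = k then 1 else if Suc k = i then -1 else 0) * (of_nat (d - j) + (if j \<le> k then 1 else 0)))"
      by (simp add: BQ P_def T_def scalar_prod_def)
    also have "\<dots> = T $$ (i,j)"
      using ij by (subst sumP) (auto simp: T_def)
    finally show "(P * (B * Q)) $$ (i,j) = T $$ (i,j)" .
  qed (auto simp: P_def T_def BQ)
  have cP: "P \<in> carrier_mat d d" and cB: "B \<in> carrier_mat d d" and cQ: "Q \<in> carrier_mat d d"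
    by (auto simp: P_def B_def Q_def)
  have dP: "det P = 1"
    by (subst det_lower_triangular[OF _ cP]) (auto simp: P_def diag_mat_def prod.list_conv_set_nth intro!: prod.neutral)
  have dQ: "det Q = 1"
    by (subst det_lower_triangular[OF _ cQ]) (auto simp: Q_def diag_mat_def prod.list_conv_set_nth intro!: prod.neutral)
  have dT: "det T = of_nat (d+1)"
  proof -
    have "det T = prod_list (diag_mat T)"
      by (rule det_upper_triangular) (auto simp: T_def upper_triangular_def)
    also have "\<dots> = (\<Prod>i\<in>{0..<d}. T $$ (i,i))"
      by (simp add: diag_mat_def T_def prod.list_conv_set_nth)
    also have "\<dots> = of_nat (d+1)"
    proof (cases d)
      case (Suc m)
      have "(\<Prod>i\<in>{0..<d}. T $$ (i,i)) = T $$ (0,0) * (\<Prod>i\<in>{Suc 0..<d}. T $$ (i,i))"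
        using Suc by (simp add: prod.atLeast_Suc_lessThan)
      also have "(\<Prod>i\<in>{Suc 0..<d}. T $$ (i,i)) = 1"
        by (rule prod.neutral) (auto simp: T_def)
      finally show ?thesis using Suc by (simp add: T_def)
    qed simp
    finally show ?thesis .
  qed
  have "det T = det P * (det B * det Q)"
    using PBQ cP cB cQ by (metis det_mult mult_carrier_mat)
  then show ?thesis using dP dQ dT B_def by simp
qed
theorem corollary4p4:
  fixes d :: nat and l :: "'a::field" and v :: "nat \<Rightarrow> nat \<Rightarrow> 'a"
  assumes "CHAR('a) \<noteq> 2"
    and "d \<ge> 1"
    and "l \<noteq> 0"
    and "\<And>i j. i \<le> d \<Longrightarrow> j \<le> d \<Longrightarrow> i \<noteq> j \<Longrightarrow> sqdist d (v i) (v j) = l"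
  shows "is_square (of_nat (d + 1) * (l / 2) ^ d)
     \<and> (even d \<longrightarrow> is_square (of_nat (d + 1) :: 'a))"
proof -
  have two: "(2::'a) \<noteq> 0" using two_ne0[OF assms(1)] .
  define W :: "'a mat" where "W = mat d d (\<lambda>(i,j). v (Suc i) j - v 0 j)"
  define B :: "'a mat" where "B = mat d d (\<lambda>(i,j). if i = j then 2 else 1)"
  have cW: "W \<in> carrier_mat d d" by (simp add: W_def)
  have G: "W * transpose_mat W = (l/2) \<cdot>\<^sub>m B"
  proof (rule eq_matI)
    fix i j assume ij: "i < dim_row ((l/2) \<cdot>\<^sub>m B)" "j < dim_col ((l/2) \<cdot>\<^sub>m B)"
    then have i: "i < d" and j: "j < d" by (auto simp: B_def)
    define a where "a k = v (Suc i) k - v 0 k" for k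
    define b where "b k = v (Suc j) k - v 0 k" for k
    have e: "(W * transpose_mat W) $$ (i,j) = (\<Sum>k<d. a k * b k)"
      using i j by (simp add: W_def scalar_prod_def a_def b_def atLeast0LessThan)
    have "2 * (\<Sum>k<d. a k * b k) = (\<Sum>k<d. (a k)^2) + (\<Sum>k<d. (b k)^2) - (\<Sum>k<d. (a k - b k)^2)"
      by (simp add: sum_distrib_left sum.distrib[symmetric] sum_subtractf[symmetric] power2_eq_square algebra_simps)
    also have "(\<Sum>k<d. (a k)^2) = l" using assms(4)[of "Suc i" 0] i unfolding sqdist_def a_def by simp
    also have "(\<Sum>k<d. (b k)^2) = l" using assms(4)[of "Suc j" 0] j unfolding sqdist_def b_def by simp
    also have "(\<Sum>k<d. (a k - b k)^2) = (if i = j then 0 else l)"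
      using assms(4)[of "Suc i" "Suc j"] i j unfolding sqdist_def a_def b_def by simp
    finally have "2 * (\<Sum>k<d. a k * b k) = l + l - (if i = j then 0 else l)" .
    then have "(\<Sum>k<d. a k * b k) = (l/2) * (if i = j then 2 else 1)"
      using two by (auto simp: field_simps)
    then show "(W * transpose_mat W) $$ (i,j) = ((l/2) \<cdot>\<^sub>m B) $$ (i,j)"
      using e i j by (simp add: B_def)
  qed (auto simp: W_def B_def)
  have "det W ^ 2 = det W * det (transpose_mat W)"
    by (simp add: det_transpose[OF cW] power2_eq_square)
  also have "\<dots> = det (W * transpose_mat W)"
    by (rule det_mult[symmetric, OF cW]) (simp add: W_def)
  also have "\<dots> = (l/2)^d * of_nat (d+1)"
    unfolding G by (simp add: B_def detB[unfolded B_def])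
  finally have sq: "of_nat (d + 1) * (l / 2) ^ d = det W ^ 2" by simp
  show ?thesis
  proof
    show "is_square (of_nat (d + 1) * (l / 2) ^ d)" using sq unfolding is_square_def by blast
    show "even d \<longrightarrow> is_square (of_nat (d + 1) :: 'a)"
    proof
      assume "even d"
      then obtain m where m: "d = 2 * m" by blast
      have nz: "(l/2)^m \<noteq> 0" using two assms(3) by simp
      have "(l/2)^d = ((l/2)^m)^2" using m by (simp add: power_mult[symmetric] mult.commute)
      then have "of_nat (d+1) = (det W / (l/2)^m)^2"
        using sq nz by (simp add: power_divide field_simps)
      then show "is_square (of_nat (d + 1) :: 'a)" unfolding is_square_def by blast
    qed
  qed
qed
end
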